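(* Let $G_0$ and $A_0$ be bounded selfadjoint operators in $\mathcal H$ with $G_0A_0G_0\ge0$, and let $[x,y]:=(G_0x,y)$. Then the bounded $G_0$-symmetric operator $A_0G_0$ satisfies: (i) $\sigma(A_0G_0)\subset\mathbb R$; (ii) $(0,\infty)\cap\sigma(A_0G_0)\subset\sigma_{++}(A_0G_0)$; (iii) $(-\infty,0)\cap\sigma(A_0G_0)\subset\sigma_{--}(A_0G_0)$.
   Context: $(\mathcal H,(\cdot,\cdot))$ complex Hilbert space. $\sigma(S)$ is the spectrum; $\sigma_{ap}(S)$ is the set of $\lambda$ with a sequence $(x_n)$, $\|x_n\|=1$, $(S-\lambda)x_n\to0$. For an operator $T$ symmetric w.r.t. $[\cdot,\cdot]$, $\sigma_{++}(T)$ ($\sigma_{--}(T)$) is the set of $\lambda\in\sigma_{ap}(T)$ such that every $(x_n)\subset\operatorname{dom}T$ with $\|x_n\|=1$, $(T-\lambda)x_n\to0$ satisfies $\liminf_n[x_n,x_n]>0$ (resp. $\limsup_n[x_n,x_n]<0$). *)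

theory Defs
  imports "HOL-Analysis.Analysis"
begin

text \<open>Complex Hilbert spaces (HOL-Analysis only has real inner product spaces).\<close>

class complex_hilbert = banach +
  fixes scaleC :: "complex \<Rightarrow> 'a \<Rightarrow> 'a" (infixr "*\<^sub>C" 75)
    and cinner :: "'a \<Rightarrow> 'a \<Rightarrow> complex"
  assumes scaleC_add_right: "a *\<^sub>C (x + y) = a *\<^sub>C x + a *\<^sub>C y"
    and scaleC_add_left: "(a + b) *\<^sub>C x = a *\<^sub>C x + b *\<^sub>C x"
    and scaleC_scaleC: "a *\<^sub>C (b *\<^sub>C x) = (a * b) *\<^sub>C x"
    and scaleC_one: "1 *\<^sub>C x = x"
    and scaleR_scaleC: "scaleR r x = complex_of_real r *\<^sub>C x"
    and cinner_add_left: "cinner (x + y) z = cinner x z + cinner y z"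
    and cinner_scaleC_left: "cinner (a *\<^sub>C x) y = a * cinner x y"
    and cinner_commute: "cinner y x = cnj (cinner x y)"
    and norm_eq_sqrt_cinner: "norm x = sqrt (Re (cinner x x))"

definition bounded_op :: "('a::complex_hilbert \<Rightarrow> 'a) \<Rightarrow> bool" where
  "bounded_op T \<longleftrightarrow> (\<forall>x y. T (x + y) = T x + T y) \<and> (\<forall>a x. T (a *\<^sub>C x) = a *\<^sub>C T x)
     \<and> (\<exists>K. \<forall>x. norm (T x) \<le> K * norm x)"

definition selfadjoint :: "('a::complex_hilbert \<Rightarrow> 'a) \<Rightarrow> bool" where
  "selfadjoint T \<longleftrightarrow> bounded_op T \<and> (\<forall>x y. cinner (T x) y = cinner x (T y))"

definition nonneg_op :: "('a::complex_hilbert \<Rightarrow> 'a) \<Rightarrow> bool" where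
  "nonneg_op T \<longleftrightarrow> (\<forall>x. cinner (T x) x \<in> \<real> \<and> 0 \<le> Re (cinner (T x) x))"

definition op_spectrum :: "('a::complex_hilbert \<Rightarrow> 'a) \<Rightarrow> complex set" where
  "op_spectrum S = {l. \<not> (\<exists>R. bounded_op R \<and> (\<forall>x. R (S x - l *\<^sub>C x) = x)
                                        \<and> (\<forall>x. S (R x) - l *\<^sub>C R x = x))}"

definition ap_spectrum :: "('a::complex_hilbert \<Rightarrow> 'a) \<Rightarrow> complex set" where
  "ap_spectrum S = {l. \<exists>x::nat \<Rightarrow> 'a. (\<forall>n. norm (x n) = 1)
                        \<and> (\<lambda>n. S (x n) - l *\<^sub>C x n) \<longlonglongrightarrow> 0}"

text \<open>Spectral points of positive / negative type with respect to the form
  [x,y] = (G x, y); here [x,x] is represented by its real part (it is real for selfadjoint G).\<close>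
definition sigma_pp :: "('a::complex_hilbert \<Rightarrow> 'a) \<Rightarrow> ('a \<Rightarrow> 'a) \<Rightarrow> complex set" where
  "sigma_pp G T = {l \<in> ap_spectrum T. \<forall>x::nat \<Rightarrow> 'a.
       (\<forall>n. norm (x n) = 1) \<and> (\<lambda>n. T (x n) - l *\<^sub>C x n) \<longlonglongrightarrow> 0
       \<longrightarrow> liminf (\<lambda>n. ereal (Re (cinner (G (x n)) (x n)))) > 0}"

definition sigma_mm :: "('a::complex_hilbert \<Rightarrow> 'a) \<Rightarrow> ('a \<Rightarrow> 'a) \<Rightarrow> complex set" where
  "sigma_mm G T = {l \<in> ap_spectrum T. \<forall>x::nat \<Rightarrow> 'a.
       (\<forall>n. norm (x n) = 1) \<and> (\<lambda>n. T (x n) - l *\<^sub>C x n) \<longlonglongrightarrow> 0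
       \<longrightarrow> limsup (\<lambda>n. ereal (Re (cinner (G (x n)) (x n)))) < 0}"

end

theory Submission
  imports Defs
begin


context complex_hilbert begin
end

lemma scaleC_zero_left[simp]: "(0::complex) *\<^sub>C (x::'a::complex_hilbert) = 0"
  by (metis scaleR_scaleC of_real_0 scaleR_zero_left)

lemma scaleC_zero_right[simp]: "a *\<^sub>C (0::'a::complex_hilbert) = 0"
  by (metis add_cancel_right_right scaleC_add_right add_0)

lemma scaleC_minus_left: "(-a) *\<^sub>C (x::'a::complex_hilbert) = - (a *\<^sub>C x)"
  by (metis scaleC_add_left add.right_inverse scaleC_zero_left eq_neg_iff_add_eq_0)

lemma scaleC_minus_right: "a *\<^sub>C (- x::'a::complex_hilbert) = - (a *\<^sub>C x)"
  by (metis scaleC_add_right add.right_inverse scaleC_zero_right eq_neg_iff_add_eq_0)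

lemma scaleC_diff_right: "a *\<^sub>C (x - y::'a::complex_hilbert) = a *\<^sub>C x - a *\<^sub>C y"
  by (metis diff_conv_add_uminus scaleC_add_right scaleC_minus_right)

lemma scaleC_diff_left: "(a - b) *\<^sub>C (x::'a::complex_hilbert) = a *\<^sub>C x - b *\<^sub>C x"
  by (metis diff_conv_add_uminus scaleC_add_left scaleC_minus_left)

lemma scaleR_scaleC_comm: "r *\<^sub>R (a *\<^sub>C (x::'a::complex_hilbert)) = a *\<^sub>C (r *\<^sub>R x)"
  by (simp add: scaleR_scaleC scaleC_scaleC mult.commute)

lemma cinner_zero_left[simp]: "cinner (0::'a::complex_hilbert) y = 0"
  by (metis add_0 add_cancel_right_right cinner_add_left)

lemma cinner_minus_left: "cinner (- x::'a::complex_hilbert) y = - cinner x y"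
  by (metis add.right_inverse cinner_add_left cinner_zero_left eq_neg_iff_add_eq_0)

lemma cinner_diff_left: "cinner (x - z::'a::complex_hilbert) y = cinner x y - cinner z y"
  by (metis diff_conv_add_uminus cinner_add_left cinner_minus_left)

lemma cinner_add_right: "cinner (x::'a::complex_hilbert) (y + z) = cinner x y + cinner x z"
  by (metis cinner_commute cinner_add_left complex_cnj_add)

lemma cinner_scaleC_right: "cinner (x::'a::complex_hilbert) (a *\<^sub>C y) = cnj a * cinner x y"
  by (metis cinner_commute cinner_scaleC_left complex_cnj_mult)

lemma cinner_zero_right[simp]: "cinner (x::'a::complex_hilbert) 0 = 0"
  by (metis cinner_commute cinner_zero_left complex_cnj_zero)

lemma cinner_minus_right: "cinner (x::'a::complex_hilbert) (- y) = - cinner x y"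
  by (metis cinner_commute cinner_minus_left complex_cnj_minus)

lemma cinner_diff_right: "cinner (x::'a::complex_hilbert) (y - z) = cinner x y - cinner x z"
  by (metis diff_conv_add_uminus cinner_add_right cinner_minus_right)

lemma cinner_scaleR_left: "cinner (r *\<^sub>R x::'a::complex_hilbert) y = of_real r * cinner x y"
  by (simp add: scaleR_scaleC cinner_scaleC_left)

lemma cinner_scaleR_right: "cinner (x::'a::complex_hilbert) (r *\<^sub>R y) = of_real r * cinner x y"
  by (simp add: scaleR_scaleC cinner_scaleC_right)

lemma cinner_self_Im: "Im (cinner (x::'a::complex_hilbert) x) = 0"
  by (metis cinner_commute cnj.sel(2) equation_minus_iff neg_equal_zero)

lemma cinner_self_Re_nonneg: "0 \<le> Re (cinner (x::'a::complex_hilbert) x)"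
  by (metis norm_eq_sqrt_cinner norm_ge_zero real_sqrt_ge_0_iff)

lemma norm_sq_cinner: "(norm (x::'a::complex_hilbert))^2 = Re (cinner x x)"
  by (simp add: norm_eq_sqrt_cinner cinner_self_Re_nonneg)

lemma cinner_self: "cinner (x::'a::complex_hilbert) x = of_real ((norm x)^2)"
  by (simp add: norm_sq_cinner complex_eq_iff cinner_self_Im)

lemma norm_add_sq: "(norm (x + y::'a::complex_hilbert))^2 = (norm x)^2 + 2 * Re (cinner x y) + (norm y)^2"
proof -
  have "Re (cinner y x) = Re (cinner x y)" by (subst cinner_commute) simp
  then show ?thesis
    by (simp add: norm_sq_cinner cinner_add_left cinner_add_right)
qed

lemma parallelogram: "(norm (x + y::'a::complex_hilbert))^2 + (norm (x - y))^2 = 2 * (norm x)^2 + 2 * (norm y)^2"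
  using norm_add_sq[of x y] norm_add_sq[of x "-y"]
  by (simp add: cinner_minus_right)

lemma Re_cs: "\<bar>Re (cinner (x::'a::complex_hilbert) y)\<bar> \<le> norm x * norm y"
proof (cases "y = 0")
  case True then show ?thesis by simp
next
  case False
  define a where "a = Re (cinner x y)"
  define t where "t = - a / (norm y)^2"
  have ny: "(norm y)^2 > 0" using False by simp
  have "0 \<le> (norm (x + t *\<^sub>R y))^2" by simp
  also have "\<dots> = (norm x)^2 + 2 * t * a + t^2 * (norm y)^2"
    by (simp add: norm_add_sq cinner_scaleR_right a_def power_mult_distrib)
  also have "\<dots> = (norm x)^2 - a^2 / (norm y)^2"
    using ny by (simp add: t_def field_simps power2_eq_square)
  finally have "a^2 \<le> (norm x)^2 * (norm y)^2" using ny by (simp add: field_simps)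
  then have "a^2 \<le> (norm x * norm y)^2" by (simp add: power_mult_distrib)
  then show ?thesis unfolding a_def
    using abs_le_square_iff[of "Re (cinner x y)" "norm x * norm y"] by simp
qed

lemma norm_scaleC: "norm (a *\<^sub>C (x::'a::complex_hilbert)) = cmod a * norm x"
proof -
  have "(norm (a *\<^sub>C x))^2 = Re (a * cnj a * cinner x x)"
    by (simp add: norm_sq_cinner cinner_scaleC_left cinner_scaleC_right mult.assoc mult.left_commute)
  also have "\<dots> = (cmod a)^2 * (norm x)^2"
    by (simp add: cinner_self complex_mult_cnj cmod_power2)
  finally have "(norm (a *\<^sub>C x))^2 = (cmod a * norm x)^2" by (simp add: power_mult_distrib)
  then show ?thesis by (simp add: power2_eq_iff_nonneg)
qed

lemma cs: "cmod (cinner (x::'a::complex_hilbert) y) \<le> norm x * norm y"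
proof (cases "cinner x y = 0")
  case True then show ?thesis by simp
next
  case False
  define c where "c = cinner x y"
  have cz: "c \<noteq> 0" using False c_def by simp
  define w where "w = cnj c / of_real (cmod c)"
  have cw: "cmod w = 1" using cz unfolding w_def by (simp add: norm_divide)
  have cc: "c * cnj c = of_real (cmod c) * of_real (cmod c)"
  proof -
    have "c * cnj c = of_real ((cmod c)^2)" by (simp add: complex_mult_cnj cmod_power2)
    then show ?thesis by (simp add: power2_eq_square)
  qed
  have cn: "of_real (cmod c) \<noteq> (0::complex)" using cz by simp
  have "cinner (w *\<^sub>C x) y = w * c"
    unfolding c_def by (rule cinner_scaleC_left)
  also have "\<dots> = (c * cnj c) / of_real (cmod c)" unfolding w_def by (simp only: times_divide_eq_right mult.commute)
  also have "\<dots> = (of_real (cmod c) * of_real (cmod c)) / of_real (cmod c)" by (simp only: cc)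
  also have "\<dots> = of_real (cmod c)" using cn by (rule nonzero_mult_div_cancel_left)
  finally have "cinner (w *\<^sub>C x) y = of_real (cmod c)" .
  then have "cmod c = Re (cinner (w *\<^sub>C x) y)" by simp
  also have "\<dots> \<le> norm (w *\<^sub>C x) * norm y" by (rule order_trans[OF abs_ge_self Re_cs])
  also have "\<dots> = norm x * norm y" by (simp add: norm_scaleC cw)
  finally show ?thesis by (simp add: c_def)
qed



lemma bop_add: "bounded_op T \<Longrightarrow> T (x + y) = T x + T y"
  unfolding bounded_op_def by blast

lemma bop_scaleC: "bounded_op T \<Longrightarrow> T (a *\<^sub>C x) = a *\<^sub>C T x"
  unfolding bounded_op_def by blast

lemma bop_scaleR: "bounded_op (T::'a::complex_hilbert \<Rightarrow> 'a) \<Longrightarrow> T (r *\<^sub>R x) = r *\<^sub>R T x"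
  by (simp add: scaleR_scaleC bop_scaleC)

lemma bop_bl: assumes "bounded_op (T::'a::complex_hilbert \<Rightarrow> 'a)" shows "bounded_linear T"
proof -
  obtain K where K: "\<forall>x. norm (T x) \<le> K * norm x" using assms unfolding bounded_op_def by blast
  show ?thesis
    by (rule bounded_linear_intro[where K=K]) (use K assms bop_add bop_scaleR in \<open>auto simp: mult.commute\<close>)
qed

lemma bop_of_bl: assumes "bounded_linear (T::'a::complex_hilbert \<Rightarrow> 'a)" "\<And>a x. T (a *\<^sub>C x) = a *\<^sub>C T x"
  shows "bounded_op T"
proof -
  interpret bounded_linear T by fact
  obtain K where "\<And>x. norm (T x) \<le> norm x * K" using bounded by blast
  then show ?thesis unfolding bounded_op_def using assms(2) add by (metis mult.commute)
qed

lemma bop_comp: assumes "bounded_op (A::'a::complex_hilbert \<Rightarrow> 'a)" "bounded_op G"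
  shows "bounded_op (A \<circ> G)"
proof (rule bop_of_bl)
  show "bounded_linear (A \<circ> G)" unfolding comp_def
    by (rule bounded_linear_compose[OF bop_bl[OF assms(1)] bop_bl[OF assms(2)]])
  show "(A \<circ> G) (a *\<^sub>C x) = a *\<^sub>C (A \<circ> G) x" for a x
    using assms by (simp add: bop_scaleC)
qed

lemma scaleC_scaleR_inv: "l *\<^sub>C (r *\<^sub>R x) = r *\<^sub>R (l *\<^sub>C (x::'a::complex_hilbert))"
  by (simp add: scaleR_scaleC_comm)

lemma notap_bb:
  assumes T: "bounded_op (T::'a::complex_hilbert \<Rightarrow> 'a)" and nap: "l \<notin> ap_spectrum T"
  shows "\<exists>c>0. \<forall>x. c * norm x \<le> norm (T x - l *\<^sub>C x)"
proof (rule ccontr)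
  assume "\<not> ?thesis"
  then have "\<forall>n::nat. \<exists>x. norm (T x - l *\<^sub>C x) < (1 / real (Suc n)) * norm x"
    by (metis not_le of_nat_0_less_iff zero_less_Suc zero_less_divide_1_iff)
  then obtain x where x: "\<And>n. norm (T (x n) - l *\<^sub>C x n) < (1 / real (Suc n)) * norm (x n)"
    by metis
  have nz: "x n \<noteq> 0" for n using x[of n] by (auto simp: bop_bl[OF T] linear_simps)
  define y where "y n = (1 / norm (x n)) *\<^sub>R x n" for n
  have ny: "norm (y n) = 1" for n using nz by (simp add: y_def)
  have ey: "T (y n) - l *\<^sub>C y n = (1 / norm (x n)) *\<^sub>R (T (x n) - l *\<^sub>C x n)" for n
    by (simp add: y_def bop_scaleR[OF T] scaleC_scaleR_inv scaleR_diff_right)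
  have "norm (T (y n) - l *\<^sub>C y n) < 1 / real (Suc n)" for n
  proof -
    have p: "norm (x n) > 0" using nz by simp
    have "norm (T (y n) - l *\<^sub>C y n) = norm (T (x n) - l *\<^sub>C x n) / norm (x n)"
      by (simp add: ey)
    also have "\<dots> < 1 / real (Suc n)" using x[of n] p by (simp add: field_simps)
    finally show ?thesis .
  qed
  then have "(\<lambda>n. T (y n) - l *\<^sub>C y n) \<longlonglongrightarrow> 0" by (rule LIMSEQ_norm_0)
  then have "l \<in> ap_spectrum T" unfolding ap_spectrum_def using ny by blast
  then show False using nap by blast
qed



lemma quad_zero: fixes a W :: real
  assumes W: "W \<ge> 0" and h: "\<And>t. 0 \<le> 2 * t * a + t^2 * W" shows "a = 0"
proof -
  define t where "t = - a / (W + 1)"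
  have p: "W + 1 > 0" using W by simp
  have "0 \<le> 2 * t * a + t^2 * W" by (rule h)
  then have "0 \<le> (2 * t * a + t^2 * W) * (W+1)^2" using p by simp
  also have "\<dots> = 2*a*(t*(W+1))*(W+1) + (t*(W+1))^2*W" by (simp add: algebra_simps power2_eq_square)
  also have "t * (W+1) = -a" using p by (simp add: t_def)
  also have "2*a*(-a)*(W+1) + (-a)^2*W = -(a^2 * (W + 2))" by (simp add: algebra_simps power2_eq_square)
  finally have "a^2 * (W+2) \<le> 0" by simp
  then have "a^2 \<le> 0" using W by (simp add: mult_le_0_iff)
  then show ?thesis by simp
qed

lemma inv_lemma:
  fixes T S :: "'a::complex_hilbert \<Rightarrow> 'a"
  assumes T: "bounded_op T" and adj: "\<And>x y. cinner (T x) y = cinner x (S y)"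
    and c: "c > 0" and bb: "\<And>x. c * norm x \<le> norm (T x - l *\<^sub>C x)"
    and ker: "\<And>y. S y = cnj l *\<^sub>C y \<Longrightarrow> y = 0"
  shows "l \<notin> op_spectrum T"
proof -
  define L where "L x = T x - l *\<^sub>C x" for x
  have blS: "bounded_linear (\<lambda>x::'a. l *\<^sub>C x)"
    by (rule bounded_linear_intro[where K="cmod l"]) (auto simp: scaleC_add_right scaleC_scaleR_inv norm_scaleC)
  have Lbl: "bounded_linear L" unfolding L_def
    by (rule bounded_linear_sub[OF bop_bl[OF T] blS])
  have LC: "L (a *\<^sub>C x) = a *\<^sub>C L x" for a x
    by (simp add: L_def bop_scaleC[OF T] scaleC_scaleC scaleC_diff_right mult.commute)
  interpret L: bounded_linear L by fact
  have Linj: "x = x'" if "L x = L x'" for x x'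
  proof -
    have "c * norm (x - x') \<le> norm (L (x - x'))" using bb by (simp add: L_def)
    also have "\<dots> = 0" using that by (simp add: L.diff)
    finally show ?thesis using c by (simp add: mult_le_0_iff)
  qed
  have surj: "\<exists>x. L x = y" for y
  proof -
    define D where "D = (\<lambda>x. (norm (L x - y))^2) ` UNIV"
    define d where "d = Inf D"
    have bdd: "bdd_below D" unfolding D_def by (rule bdd_belowI[where m=0]) auto
    have dle: "d \<le> (norm (L z - y))^2" for z unfolding d_def
      by (rule cInf_lower) (use bdd in \<open>auto simp: D_def\<close>)
    have "\<exists>x. (norm (L x - y))^2 < d + 1 / real (Suc k)" for k :: nat
    proof -
      have "Inf D < d + 1 / real (Suc k)" unfolding d_def by simp
      then obtain v where "v \<in> D" "v < d + 1 / real (Suc k)"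
        using cInf_less_iff[of D] bdd unfolding D_def by auto
      then show ?thesis unfolding D_def by auto
    qed
    then obtain xs where xs: "\<And>k. (norm (L (xs k) - y))^2 < d + 1 / real (Suc k)" by metis
    have cb: "(norm (L (xs m) - L (xs n)))^2 \<le> 2 / real (Suc m) + 2 / real (Suc n)" for m n
    proof -
      define a where "a = L (xs m) - y"
      define b where "b = L (xs n) - y"
      define mid where "mid = (1/2) *\<^sub>R (xs m + xs n)"
      have "a + b = 2 *\<^sub>R (L mid - y)"
        by (simp add: a_def b_def mid_def L.scaleR L.add algebra_simps scaleR_2)
      then have "(norm (a + b))^2 = 4 * (norm (L mid - y))^2"
        by (simp add: power_mult_distrib)
      then have "(norm (a + b))^2 \<ge> 4 * d" using dle[of mid] by simp
      moreover have "a - b = L (xs m) - L (xs n)" by (simp add: a_def b_def)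
      moreover note parallelogram[of a b]
      moreover have "(norm a)^2 < d + 1 / real (Suc m)" using xs a_def by simp
      moreover have "(norm b)^2 < d + 1 / real (Suc n)" using xs b_def by simp
      ultimately show ?thesis by simp
    qed
    have cxs: "c^2 * (norm (xs m - xs n))^2 \<le> 2 / real (Suc m) + 2 / real (Suc n)" for m n
    proof -
      have "c * norm (xs m - xs n) \<le> norm (L (xs m) - L (xs n))"
        using bb[of "xs m - xs n"] by (simp add: L_def [symmetric] L.diff)
      then have "(c * norm (xs m - xs n))^2 \<le> (norm (L (xs m) - L (xs n)))^2"
        using c by (intro power_mono) auto
      then show ?thesis using cb[of m n] by (simp add: power_mult_distrib)
    qed
    have "Cauchy xs"
    proof (rule CauchyI)
      fix e :: real assume e: "0 < e"
      obtain M :: nat where M: "4 / (c^2 * e^2) < real M" using reals_Archimedean2 by blast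
      have ce: "c^2 * e^2 > 0" using c e by simp
      have M2: "4 / real (Suc M) < c^2 * e^2"
      proof -
        have "4 < c^2 * e^2 * real M" using M ce by (simp add: field_simps)
        also have "\<dots> < c^2 * e^2 * real (Suc M)" using ce by (intro mult_strict_left_mono) auto
        finally show ?thesis by (simp add: field_simps)
      qed
      show "\<exists>M. \<forall>m\<ge>M. \<forall>n\<ge>M. norm (xs m - xs n) < e"
      proof (intro exI allI impI)
        fix m n assume mn: "M \<le> m" "M \<le> n"
        have "2 / real (Suc m) \<le> 2 / real (Suc M)" using mn by (simp add: frac_le)
        moreover have "2 / real (Suc n) \<le> 2 / real (Suc M)" using mn by (simp add: frac_le)
        ultimately have "c^2 * (norm (xs m - xs n))^2 < c^2 * e^2" using cxs[of m n] M2 by simp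
        then have "(norm (xs m - xs n))^2 < e^2" using c by simp
        then show "norm (xs m - xs n) < e" using e by (simp add: power_less_imp_less_base)
      qed
    qed
    then obtain x0 where x0: "xs \<longlonglongrightarrow> x0" using Cauchy_convergent_iff convergent_def by blast
    have "(\<lambda>k. L (xs k)) \<longlonglongrightarrow> L x0" using L.tendsto[OF x0] .
    then have fl: "(\<lambda>k. (norm (L (xs k) - y))^2) \<longlonglongrightarrow> (norm (L x0 - y))^2"
      by (intro tendsto_intros)
    have opt: "(norm (L x0 - y))^2 \<le> (norm (L z - y))^2" for z
    proof (rule LIMSEQ_le[OF fl])
      have "(\<lambda>k. (norm (L z - y))^2 + inverse (real (Suc k))) \<longlonglongrightarrow> (norm (L z - y))^2 + 0"
        by (intro tendsto_intros LIMSEQ_inverse_real_of_nat)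
      then show "(\<lambda>k. (norm (L z - y))^2 + inverse (real (Suc k))) \<longlonglongrightarrow> (norm (L z - y))^2" by simp
      show "\<exists>N. \<forall>k\<ge>N. (norm (L (xs k) - y))^2 \<le> (norm (L z - y))^2 + inverse (real (Suc k))"
      proof (intro exI allI impI)
        fix k :: nat
        show "(norm (L (xs k) - y))^2 \<le> (norm (L z - y))^2 + inverse (real (Suc k))"
          using xs[of k] dle[of z] by (simp add: inverse_eq_divide)
      qed
    qed
    define r where "r = L x0 - y"
    have reo: "Re (cinner r (L z)) = 0" for z
    proof (rule quad_zero[where W="(norm (L z))^2"])
      show "0 \<le> (norm (L z))^2" by simp
      fix t :: real
      have "(norm r)^2 \<le> (norm (L (x0 + t *\<^sub>R z) - y))^2" using opt r_def by simp
      also have "L (x0 + t *\<^sub>R z) - y = r + t *\<^sub>R L z" by (simp add: r_def L.add L.scaleR algebra_simps)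
      finally show "0 \<le> 2 * t * Re (cinner r (L z)) + t^2 * (norm (L z))^2"
        by (simp add: norm_add_sq cinner_scaleR_right power_mult_distrib)
    qed
    have o: "cinner r (L z) = 0" for z
    proof -
      have "Re (cinner r (L (\<i> *\<^sub>C z))) = 0" by (rule reo)
      then have "Im (cinner r (L z)) = 0" by (simp add: LC cinner_scaleC_right)
      then show ?thesis using reo[of z] by (simp add: complex_eq_iff)
    qed
    define w where "w = S r - cnj l *\<^sub>C r"
    have e1: "cinner (L z) r = cinner z w" for z
      by (simp add: L_def cinner_diff_left cinner_diff_right cinner_scaleC_left cinner_scaleC_right adj w_def)
    have e2: "cinner (L z) r = 0" for z using o[of z] by (subst cinner_commute) simp
    have "cinner w w = 0" using e1[of w] e2[of w] by simp
    then have "w = 0" by (simp add: cinner_self)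
    then have "r = 0" using ker w_def by simp
    then show ?thesis using r_def by auto
  qed
  define R where "R y = (THE x. L x = y)" for y
  have LR: "L (R y) = y" for y unfolding R_def
    by (rule theI') (use surj[of y] Linj in blast)
  have RL: "R (L x) = x" for x using LR Linj by blast
  have Rop: "bounded_op R" unfolding bounded_op_def
  proof (intro conjI allI exI)
    show "R (x + y) = R x + R y" for x y by (rule Linj) (simp add: LR L.add)
    show "R (a *\<^sub>C x) = a *\<^sub>C R x" for a x by (rule Linj) (simp add: LR LC)
    show "norm (R x) \<le> (1 / c) * norm x" for x
      using bb[of "R x"] LR[of x] c by (simp add: L_def field_simps)
  qed
  show ?thesis unfolding op_spectrum_def
    using Rop LR RL unfolding L_def by blast
qed



lemma nonneg_cs:
  fixes P :: "'a::complex_hilbert \<Rightarrow> 'a"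
  assumes Pb: "bounded_linear P" and Psym: "\<And>x y. cinner (P x) y = cinner x (P y)"
    and K: "K > 0" and Kb: "\<And>x. norm (P x) \<le> norm x * K"
    and nn: "\<And>x. 0 \<le> Re (cinner (P x) x)"
  shows "(norm (P x))^2 \<le> K * Re (cinner (P x) x)"
proof -
  interpret P: bounded_linear P by fact
  define s where "s = 1 / K"
  define u where "u = x - s *\<^sub>R P x"
  define N where "N = (norm (P x))^2"
  define M where "M = Re (cinner (P (P x)) (P x))"
  define Q where "Q = Re (cinner (P x) x)"
  have ps: "cinner (P (P x)) x = cinner (P x) (P x)" by (rule Psym)
  have nn2: "Re (cinner (P x) (P x)) = norm (P x) * norm (P x)"
    using norm_sq_cinner[of "P x"] by (simp add: power2_eq_square)
  have "Re (cinner (P u) u) = Q - 2 * s * N + s^2 * M"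
    by (simp add: u_def P.diff P.scaleR cinner_diff_left cinner_diff_right cinner_scaleR_left
        cinner_scaleR_right ps Q_def N_def M_def nn2 power2_eq_square algebra_simps)
  then have 0: "0 \<le> Q - 2 * s * N + s^2 * M" using nn[of u] by simp
  have "M \<le> norm (P (P x)) * norm (P x)" unfolding M_def using Re_cs abs_ge_self order_trans by blast
  also have "\<dots> \<le> (norm (P x) * K) * norm (P x)" using Kb by (simp add: mult_right_mono)
  finally have "M \<le> K * N" by (simp add: N_def power2_eq_square algebra_simps)
  then have "s^2 * M \<le> s^2 * (K * N)" by (simp add: mult_left_mono)
  then have "0 \<le> Q - 2 * s * N + s^2 * (K * N)" using 0 by linarith
  also have "\<dots> = Q - N / K" using K by (simp add: s_def field_simps power2_eq_square)
  finally show ?thesis using K by (simp add: N_def Q_def field_simps)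
qed

lemma sa_bop: "selfadjoint T \<Longrightarrow> bounded_op T" unfolding selfadjoint_def by blast
lemma sa_sym: "selfadjoint T \<Longrightarrow> cinner (T x) y = cinner x (T y)" unfolding selfadjoint_def by blast

lemma key_ineq:
  fixes G A :: "'a::complex_hilbert \<Rightarrow> 'a"
  assumes sG: "selfadjoint G" and sA: "selfadjoint A"
    and KA: "KA > 0" "\<And>x. norm (A x) \<le> norm x * KA"
    and KG: "KG > 0" "\<And>x. norm (G x) \<le> norm x * KG"
    and KP: "\<And>x. (norm (G (A (G x))))^2 \<le> KP * Re (cinner (G (A (G x))) x)"
    and nx: "norm x = 1"
  shows "(cmod l)^2 \<le> KA * (sqrt (KP * Re (cinner (G (A (G x))) x)) + KG * norm (A (G x) - l *\<^sub>C x))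
           + cmod l * norm (A (G x) - l *\<^sub>C x)"
    and "cinner (G (A (G x))) x = l * cinner (G x) x + cinner (A (G x) - l *\<^sub>C x) (G x)"
    and "cmod (cinner (A (G x) - l *\<^sub>C x) (G x)) \<le> KG * norm (A (G x) - l *\<^sub>C x)"
    and "Im (cinner (G x) x) = 0"
proof -
  define e where "e = A (G x) - l *\<^sub>C x"
  interpret G: bounded_linear G by (rule bop_bl[OF sa_bop[OF sG]])
  have Gx: "norm (G x) \<le> KG" using KG(2)[of x] nx by simp
  have "cmod l = norm (l *\<^sub>C x)" using nx by (simp add: norm_scaleC)
  also have "l *\<^sub>C x = A (G x) - e" by (simp add: e_def)
  also have "norm (A (G x) - e) \<le> norm (A (G x)) + norm e" by (rule norm_triangle_ineq4)
  finally have c1: "cmod l \<le> KA * norm (G x) + norm e" using KA(2)[of "G x"] by (simp add: mult.commute)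
  have "G e = G (A (G x)) - l *\<^sub>C G x"
    by (simp add: e_def G.diff bop_scaleC[OF sa_bop[OF sG]])
  then have "l *\<^sub>C G x = G (A (G x)) - G e" by simp
  then have "cmod l * norm (G x) = norm (G (A (G x)) - G e)" by (metis norm_scaleC)
  also have "\<dots> \<le> norm (G (A (G x))) + norm (G e)" by (rule norm_triangle_ineq4)
  also have "\<dots> \<le> sqrt (KP * Re (cinner (G (A (G x))) x)) + KG * norm e"
    using KP[of x] KG(2)[of e] by (intro add_mono real_le_rsqrt) (auto simp: mult.commute)
  finally have c2: "cmod l * norm (G x) \<le> sqrt (KP * Re (cinner (G (A (G x))) x)) + KG * norm e" .
  have "(cmod l)^2 = cmod l * cmod l" by (simp add: power2_eq_square)
  also have "\<dots> \<le> cmod l * (KA * norm (G x) + norm e)" using c1 by (simp add: mult_left_mono)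
  also have "\<dots> = KA * (cmod l * norm (G x)) + cmod l * norm e" by (simp add: algebra_simps)
  also have "\<dots> \<le> KA * (sqrt (KP * Re (cinner (G (A (G x))) x)) + KG * norm e) + cmod l * norm e"
    using c2 KA(1) by (simp add: mult_left_mono)
  finally show "(cmod l)^2 \<le> KA * (sqrt (KP * Re (cinner (G (A (G x))) x)) + KG * norm (A (G x) - l *\<^sub>C x))
           + cmod l * norm (A (G x) - l *\<^sub>C x)" by (simp add: e_def)
  have "cinner (G (A (G x))) x = cinner (A (G x)) (G x)" by (rule sa_sym[OF sG])
  also have "A (G x) = l *\<^sub>C x + e" by (simp add: e_def)
  also have "cinner (l *\<^sub>C x + e) (G x) = l * cinner (G x) x + cinner e (G x)"
    by (simp add: cinner_add_left cinner_scaleC_left sa_sym[OF sG])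
  finally show "cinner (G (A (G x))) x = l * cinner (G x) x + cinner (A (G x) - l *\<^sub>C x) (G x)"
    by (simp add: e_def)
  have "cmod (cinner e (G x)) \<le> norm e * norm (G x)" by (rule cs)
  also have "\<dots> \<le> norm e * KG" using Gx by (simp add: mult_left_mono)
  finally show "cmod (cinner (A (G x) - l *\<^sub>C x) (G x)) \<le> KG * norm (A (G x) - l *\<^sub>C x)"
    by (simp add: e_def mult.commute)
  have "cinner (G x) x = cnj (cinner (G x) x)"
    by (metis cinner_commute sa_sym[OF sG])
  then show "Im (cinner (G x) x) = 0" by (metis cnj.sel(2) equation_minus_iff neg_equal_zero)
qed

lemma nonreal_not_ap:
  fixes G A :: "'a::complex_hilbert \<Rightarrow> 'a"
  assumes sG: "selfadjoint G" and sA: "selfadjoint A"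
    and KA: "KA > 0" "\<And>x. norm (A x) \<le> norm x * KA"
    and KG: "KG > 0" "\<And>x. norm (G x) \<le> norm x * KG"
    and KP: "KP > 0" "\<And>x. (norm (G (A (G x))))^2 \<le> KP * Re (cinner (G (A (G x))) x)"
    and nn: "\<And>x. cinner (G (A (G x))) x \<in> \<real>"
    and l: "l \<notin> \<real>"
  shows "l \<notin> ap_spectrum (A \<circ> G)"
proof
  assume "l \<in> ap_spectrum (A \<circ> G)"
  then obtain x where ux: "\<And>n. norm (x n) = 1"
    and ex: "(\<lambda>n. A (G (x n)) - l *\<^sub>C x n) \<longlonglongrightarrow> 0"
    unfolding ap_spectrum_def by auto
  have Iml: "Im l \<noteq> 0" using l by (simp add: complex_is_Real_iff)
  define C where "C = KG * (\<bar>Re l\<bar> / \<bar>Im l\<bar> + 1)"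
  define h where "h t = KA * (sqrt (KP * (C * t)) + KG * t) + cmod l * t" for t
  have bound: "(cmod l)^2 \<le> h (norm (A (G (x n)) - l *\<^sub>C x n))" for n
  proof -
    define e where "e = A (G (x n)) - l *\<^sub>C x n"
    define s where "s = cinner (G (x n)) (x n)"
    define c where "c = cinner e (G (x n))"
    define q where "q = cinner (G (A (G (x n)))) (x n)"
    note k = key_ineq[OF sG sA KA KG KP(2) ux[of n]]
    have qe: "q = l * s + c" using k(2)[of l] by (simp add: q_def s_def c_def e_def)
    have cb: "cmod c \<le> KG * norm e" using k(3)[of l] by (simp add: c_def e_def)
    have Ims: "Im s = 0" using k(4) by (simp add: s_def)
    have Imq: "Im q = 0" using nn[of "x n"] by (simp add: q_def complex_is_Real_iff)
    have "Im l * Re s = - Im c" using qe Imq Ims by simp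
    then have "\<bar>Im l\<bar> * \<bar>Re s\<bar> \<le> KG * norm e"
      using abs_Im_le_cmod[of c] cb by (metis abs_minus_cancel abs_mult order_trans)
    then have rs: "\<bar>Re s\<bar> \<le> KG * norm e / \<bar>Im l\<bar>" using Iml by (simp add: field_simps)
    have "Re q = Re l * Re s + Re c" using qe Ims by simp
    also have "\<dots> \<le> \<bar>Re l\<bar> * \<bar>Re s\<bar> + KG * norm e"
      using abs_Re_le_cmod[of c] cb by (intro add_mono) (auto simp: abs_mult[symmetric])
    also have "\<dots> \<le> \<bar>Re l\<bar> * (KG * norm e / \<bar>Im l\<bar>) + KG * norm e"
      using mult_left_mono[OF rs abs_ge_zero[of "Re l"]] by simp
    also have "\<dots> = C * norm e" by (simp add: C_def algebra_simps)
    finally have rq: "Re q \<le> C * norm e" .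
    have sq: "sqrt (KP * Re q) \<le> sqrt (KP * (C * norm e))"
      using rq KP(1) by (intro real_sqrt_le_mono mult_left_mono) auto
    have "KA * (sqrt (KP * Re q) + KG * norm e) \<le> KA * (sqrt (KP * (C * norm e)) + KG * norm e)"
      using sq KA(1) by (intro mult_left_mono) auto
    then show ?thesis using k(1)[of l] unfolding h_def
      by (simp add: q_def e_def)
  qed
  have "(\<lambda>n. norm (A (G (x n)) - l *\<^sub>C x n)) \<longlonglongrightarrow> 0" using ex by (rule tendsto_norm_zero)
  then have "(\<lambda>n. h (norm (A (G (x n)) - l *\<^sub>C x n))) \<longlonglongrightarrow> h 0"
    unfolding h_def by (intro tendsto_intros)
  moreover have "h 0 = 0" by (simp add: h_def)
  moreover have "(cmod l)^2 > 0" using Iml by (auto simp: complex_eq_iff)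
  ultimately have "eventually (\<lambda>n. h (norm (A (G (x n)) - l *\<^sub>C x n)) < (cmod l)^2) sequentially"
    by (metis order_tendstoD(2))
  then obtain n where "h (norm (A (G (x n)) - l *\<^sub>C x n)) < (cmod l)^2" by (auto simp: eventually_sequentially)
  then show False using bound[of n] by simp
qed

lemma real_core:
  fixes G A :: "'a::complex_hilbert \<Rightarrow> 'a"
  assumes sG: "selfadjoint G" and sA: "selfadjoint A"
    and KA: "KA > 0" "\<And>x. norm (A x) \<le> norm x * KA"
    and KG: "KG > 0" "\<And>x. norm (G x) \<le> norm x * KG"
    and KP: "KP > 0" "\<And>x. (norm (G (A (G x))))^2 \<le> KP * Re (cinner (G (A (G x))) x)"
    and r: "r \<noteq> 0"
  shows "\<exists>t>0. \<forall>x. norm x = 1 \<longrightarrow> norm (A (G x) - complex_of_real r *\<^sub>C x) < t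
            \<longrightarrow> \<bar>r\<bar> * t < r * Re (cinner (G x) x)"
proof -
  define h where "h t = KA * (sqrt (KP * (\<bar>r\<bar> * t + KG * t)) + KG * t) + \<bar>r\<bar> * t" for t
  have "(h \<longlongrightarrow> h 0) (at_right 0)" unfolding h_def by (intro tendsto_intros)
  moreover have "h 0 = 0" by (simp add: h_def)
  moreover have "r^2 > 0" using r by simp
  ultimately have "eventually (\<lambda>t. h t < r^2) (at_right 0)" by (metis order_tendstoD(2))
  then obtain b where b: "b > 0" "\<And>t. t > 0 \<Longrightarrow> t < b \<Longrightarrow> h t < r^2"
    unfolding eventually_at_right_field by auto
  define t0 where "t0 = b / 2"
  have t0: "t0 > 0" "h t0 < r^2" using b by (auto simp: t0_def)
  show ?thesis
  proof (intro exI conjI allI impI)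
    show "t0 > 0" by fact
    fix x assume nx: "norm x = 1" and et: "norm (A (G x) - complex_of_real r *\<^sub>C x) < t0"
    show "\<bar>r\<bar> * t0 < r * Re (cinner (G x) x)"
    proof (rule ccontr)
      assume ng: "\<not> ?thesis"
      define l where "l = complex_of_real r"
      define e where "e = A (G x) - l *\<^sub>C x"
      define s where "s = cinner (G x) x"
      define c where "c = cinner e (G x)"
      define q where "q = cinner (G (A (G x))) x"
      note k = key_ineq[OF sG sA KA KG KP(2) nx]
      have qe: "q = l * s + c" using k(2)[of l] by (simp add: q_def s_def c_def e_def)
      have cb: "cmod c \<le> KG * norm e" using k(3)[of l] by (simp add: c_def e_def)
      have ne: "norm e \<le> t0" using et by (simp add: e_def l_def)
      have "Re q = r * Re s + Re c" using qe by (simp add: l_def)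
      also have "\<dots> \<le> \<bar>r\<bar> * t0 + KG * t0"
      proof -
        have "Re c \<le> KG * norm e" using abs_Re_le_cmod[of c] cb by linarith
        also have "\<dots> \<le> KG * t0" using ne KG(1) by (simp add: mult_left_mono)
        finally show ?thesis using ng by (simp add: s_def)
      qed
      finally have rq: "Re q \<le> \<bar>r\<bar> * t0 + KG * t0" .
      have sq: "sqrt (KP * Re q) \<le> sqrt (KP * (\<bar>r\<bar> * t0 + KG * t0))"
        using rq KP(1) by (intro real_sqrt_le_mono mult_left_mono) auto
      have "KA * (sqrt (KP * Re q) + KG * norm e) \<le> KA * (sqrt (KP * (\<bar>r\<bar> * t0 + KG * t0)) + KG * t0)"
        using sq KA(1) KG(1) ne by (intro mult_left_mono add_mono) auto
      moreover have "\<bar>r\<bar> * norm e \<le> \<bar>r\<bar> * t0" using ne by (simp add: mult_left_mono)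
      moreover have "(cmod l)^2 \<le> KA * (sqrt (KP * Re q) + KG * norm e) + cmod l * norm e"
        using k(1)[of l] by (simp add: q_def e_def)
      moreover have "cmod l = \<bar>r\<bar>" by (simp add: l_def)
      ultimately have "r^2 \<le> h t0" unfolding h_def by simp
      then show False using t0 by simp
    qed
  qed
qed

lemma spec_out:
  fixes G A :: "'a::complex_hilbert \<Rightarrow> 'a"
  assumes sG: "selfadjoint G" and sA: "selfadjoint A" and l: "l \<noteq> 0"
    and n1: "l \<notin> ap_spectrum (A \<circ> G)" and n2: "cnj l \<notin> ap_spectrum (A \<circ> G)"
  shows "l \<notin> op_spectrum (A \<circ> G)"
proof -
  have T: "bounded_op (A \<circ> G)" by (rule bop_comp[OF sa_bop[OF sA] sa_bop[OF sG]])
  obtain c where c: "c > 0" "\<And>x. c * norm x \<le> norm ((A \<circ> G) x - l *\<^sub>C x)"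
    using notap_bb[OF T n1] by blast
  obtain c' where c': "c' > 0" "\<And>x. c' * norm x \<le> norm ((A \<circ> G) x - cnj l *\<^sub>C x)"
    using notap_bb[OF T n2] by blast
  show ?thesis
  proof (rule inv_lemma[OF T _ c, where S="G \<circ> A"])
    show "cinner ((A \<circ> G) x) y = cinner x ((G \<circ> A) y)" for x y
      by (simp add: sa_sym[OF sA] sa_sym[OF sG])
    fix y assume y: "(G \<circ> A) y = cnj l *\<^sub>C y"
    have "c' * norm (A y) \<le> norm ((A \<circ> G) (A y) - cnj l *\<^sub>C A y)" by (rule c'(2))
    also have "(A \<circ> G) (A y) = A (cnj l *\<^sub>C y)" using y by simp
    also have "A (cnj l *\<^sub>C y) = cnj l *\<^sub>C A y" by (rule bop_scaleC[OF sa_bop[OF sA]])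
    finally have "c' * norm (A y) \<le> 0" by simp
    then have "A y = 0" using c'(1) by (simp add: mult_le_0_iff)
    then have "cnj l *\<^sub>C y = 0" using y bop_bl[OF sa_bop[OF sG]] by (simp add: linear_simps)
    then have "cmod (cnj l) * norm y = 0" by (metis norm_scaleC norm_zero)
    then show "y = 0" using l by simp
  qed
qed



theorem propositionp:
  fixes G A :: "'a::complex_hilbert \<Rightarrow> 'a"
  assumes "selfadjoint G" and "selfadjoint A" and "nonneg_op (G \<circ> A \<circ> G)"
  shows "bounded_op (A \<circ> G) \<and> (\<forall>x y. cinner (G ((A \<circ> G) x)) y = cinner (G x) ((A \<circ> G) y))
    \<and> op_spectrum (A \<circ> G) \<subseteq> \<real>
    \<and> {l. l \<in> \<real> \<and> Re l > 0} \<inter> op_spectrum (A \<circ> G) \<subseteq> sigma_pp G (A \<circ> G)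
    \<and> {l. l \<in> \<real> \<and> Re l < 0} \<inter> op_spectrum (A \<circ> G) \<subseteq> sigma_mm G (A \<circ> G)"
proof -
  note sG = assms(1) and sA = assms(2)
  have nnR: "cinner (G (A (G x))) x \<in> \<real>" and nnP: "0 \<le> Re (cinner (G (A (G x))) x)" for x
    using assms(3) unfolding nonneg_op_def by auto
  interpret Ab: bounded_linear A by (rule bop_bl[OF sa_bop[OF sA]])
  interpret Gb: bounded_linear G by (rule bop_bl[OF sa_bop[OF sG]])
  obtain KA where KA: "KA > 0" "\<And>x. norm (A x) \<le> norm x * KA" using Ab.pos_bounded by blast
  obtain KG where KG: "KG > 0" "\<And>x. norm (G x) \<le> norm x * KG" using Gb.pos_bounded by blast
  have Pbl: "bounded_linear (\<lambda>x. G (A (G x)))"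
    by (intro bounded_linear_compose[OF Gb.bounded_linear_axioms]
          bounded_linear_compose[OF Ab.bounded_linear_axioms] Gb.bounded_linear_axioms)
  then interpret Pb: bounded_linear "\<lambda>x. G (A (G x))" .
  obtain KP where KP0: "KP > 0" "\<And>x. norm (G (A (G x))) \<le> norm x * KP" using Pb.pos_bounded by blast
  have Psym: "cinner (G (A (G x))) y = cinner x (G (A (G y)))" for x y
    by (simp add: sa_sym[OF sA] sa_sym[OF sG])
  have KP: "(norm (G (A (G x))))^2 \<le> KP * Re (cinner (G (A (G x))) x)" for x
    using nonneg_cs[OF Pbl Psym KP0(1) KP0(2) nnP] by simp
  have T: "bounded_op (A \<circ> G)" by (rule bop_comp[OF sa_bop[OF sA] sa_bop[OF sG]])
  have sym: "\<forall>x y. cinner (G ((A \<circ> G) x)) y = cinner (G x) ((A \<circ> G) y)"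
    by (simp add: sa_sym[OF sA] sa_sym[OF sG])
  have nr: "l \<notin> ap_spectrum (A \<circ> G)" if "l \<notin> \<real>" for l
    by (rule nonreal_not_ap[OF sG sA KA KG KP0(1) KP nnR that])
  have real: "op_spectrum (A \<circ> G) \<subseteq> \<real>"
  proof
    fix l assume ls: "l \<in> op_spectrum (A \<circ> G)"
    show "l \<in> \<real>"
    proof (rule ccontr)
      assume n: "l \<notin> \<real>"
      then have "l \<noteq> 0" by auto
      moreover have "cnj l \<notin> \<real>" using n by (simp add: Reals_cnj_iff)
      ultimately have "l \<notin> op_spectrum (A \<circ> G)"
        using spec_out[OF sG sA] nr n by blast
      then show False using ls by blast
    qed
  qed
  have inap: "l \<in> ap_spectrum (A \<circ> G)" if "l \<in> \<real>" "l \<noteq> 0" "l \<in> op_spectrum (A \<circ> G)" for l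
    using spec_out[OF sG sA] that by (metis Reals_cnj_iff)
  have core: "\<exists>t>0. \<forall>x. norm x = 1 \<longrightarrow> norm (A (G x) - complex_of_real r *\<^sub>C x) < t
            \<longrightarrow> \<bar>r\<bar> * t < r * Re (cinner (G x) x)" if "r \<noteq> 0" for r
    by (rule real_core[OF sG sA KA KG KP0(1) KP that])
  have seqev: "\<exists>t>0. eventually (\<lambda>n. \<bar>Re l\<bar> * t < Re l * Re (cinner (G (x n)) (x n))) sequentially"
    if hyp: "l \<in> \<real>" "Re l \<noteq> 0" "\<forall>n. norm (x n) = 1" "(\<lambda>n. (A \<circ> G) (x n) - l *\<^sub>C x n) \<longlonglongrightarrow> 0"
    for l x
  proof -
    have lr: "l = complex_of_real (Re l)" using hyp(1) by (simp add: complex_is_Real_iff complex_eq_iff)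
    obtain t where t: "t > 0" "\<And>x. norm x = 1 \<Longrightarrow> norm (A (G x) - complex_of_real (Re l) *\<^sub>C x) < t
            \<Longrightarrow> \<bar>Re l\<bar> * t < Re l * Re (cinner (G x) x)"
      using core[OF hyp(2)] by blast
    have "(\<lambda>n. norm ((A \<circ> G) (x n) - l *\<^sub>C x n)) \<longlonglongrightarrow> 0" using hyp(4) by (rule tendsto_norm_zero)
    then have "eventually (\<lambda>n. norm ((A \<circ> G) (x n) - l *\<^sub>C x n) < t) sequentially"
      using t(1) by (metis order_tendstoD(2))
    then have "eventually (\<lambda>n. \<bar>Re l\<bar> * t < Re l * Re (cinner (G (x n)) (x n))) sequentially"
      by eventually_elim (use t(2) hyp(3) lr in \<open>metis comp_apply\<close>)
    then show ?thesis using t(1) by blast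
  qed
  have pp: "{l. l \<in> \<real> \<and> Re l > 0} \<inter> op_spectrum (A \<circ> G) \<subseteq> sigma_pp G (A \<circ> G)"
  proof
    fix l assume "l \<in> {l. l \<in> \<real> \<and> Re l > 0} \<inter> op_spectrum (A \<circ> G)"
    then have l: "l \<in> \<real>" "Re l > 0" "l \<in> op_spectrum (A \<circ> G)" by auto
    have "l \<noteq> 0" using l(2) by auto
    then have ap: "l \<in> ap_spectrum (A \<circ> G)" using inap l by blast
    show "l \<in> sigma_pp G (A \<circ> G)" unfolding sigma_pp_def
    proof (intro CollectI conjI allI impI ap)
      fix x assume xa: "(\<forall>n. norm (x n) = 1) \<and> (\<lambda>n. (A \<circ> G) (x n) - l *\<^sub>C x n) \<longlonglongrightarrow> 0"
      obtain t where t: "t > 0"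
        "eventually (\<lambda>n. \<bar>Re l\<bar> * t < Re l * Re (cinner (G (x n)) (x n))) sequentially"
        using seqev[of l x] l xa by auto
      have ev: "eventually (\<lambda>n. t < Re (cinner (G (x n)) (x n))) sequentially"
        using t(2) by eventually_elim (use l(2) in auto)
      have "ereal t \<le> liminf (\<lambda>n. ereal (Re (cinner (G (x n)) (x n))))"
        unfolding le_Liminf_iff
      proof (intro allI impI)
        fix y assume "y < ereal t"
        show "eventually (\<lambda>n. y < ereal (Re (cinner (G (x n)) (x n)))) sequentially"
          using ev by eventually_elim (use \<open>y < ereal t\<close> in \<open>auto intro: order.strict_trans\<close>)
      qed
      moreover have "0 < ereal t" using t(1) by simp
      ultimately show "0 < liminf (\<lambda>n. ereal (Re (cinner (G (x n)) (x n))))" by (rule order.strict_trans2[rotated])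
    qed
  qed
  have mm: "{l. l \<in> \<real> \<and> Re l < 0} \<inter> op_spectrum (A \<circ> G) \<subseteq> sigma_mm G (A \<circ> G)"
  proof
    fix l assume "l \<in> {l. l \<in> \<real> \<and> Re l < 0} \<inter> op_spectrum (A \<circ> G)"
    then have l: "l \<in> \<real>" "Re l < 0" "l \<in> op_spectrum (A \<circ> G)" by auto
    have "l \<noteq> 0" using l(2) by auto
    then have ap: "l \<in> ap_spectrum (A \<circ> G)" using inap l by blast
    show "l \<in> sigma_mm G (A \<circ> G)" unfolding sigma_mm_def
    proof (intro CollectI conjI allI impI ap)
      fix x assume xa: "(\<forall>n. norm (x n) = 1) \<and> (\<lambda>n. (A \<circ> G) (x n) - l *\<^sub>C x n) \<longlonglongrightarrow> 0"
      obtain t where t: "t > 0"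
        "eventually (\<lambda>n. \<bar>Re l\<bar> * t < Re l * Re (cinner (G (x n)) (x n))) sequentially"
        using seqev[of l x] l xa by auto
      have ev: "eventually (\<lambda>n. Re (cinner (G (x n)) (x n)) < - t) sequentially"
        using t(2)
      proof eventually_elim
        case (elim n)
        then have "Re l * (- t) < Re l * Re (cinner (G (x n)) (x n))" using l(2) by simp
        then show ?case using l(2) mult_less_cancel_left_neg[of "Re l" "- t" "Re (cinner (G (x n)) (x n))"] by linarith
      qed
      have "limsup (\<lambda>n. ereal (Re (cinner (G (x n)) (x n)))) \<le> ereal (- t)"
        unfolding Limsup_le_iff
      proof (intro allI impI)
        fix y assume "y > ereal (- t)"
        show "eventually (\<lambda>n. y > ereal (Re (cinner (G (x n)) (x n)))) sequentially"
          using ev by eventually_elim (rule order.strict_trans[OF _ \<open>y > ereal (- t)\<close>], simp)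
      qed
      moreover have "ereal (- t) < 0" using t(1) by simp
      ultimately show "limsup (\<lambda>n. ereal (Re (cinner (G (x n)) (x n)))) < 0" by (rule order.strict_trans1)
    qed
  qed
  show ?thesis using T sym real pp mm by blast
qed

end
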